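(* Let $Y$ be a real normed space and let $X\subseteq Y$ be a non-empty compact set which is uniquely remotal with respect to $\mathrm{conv}(X)$. Then $X$ is a singleton.
   Context: A non-empty set $C$ in a normed space $S$ is said to be uniquely remotal with respect to a set $D\subseteq S$ if, for each $y\in D$, there exists a unique $x\in C$ such that $\|x-y\|=\sup_{u\in C}\|u-y\|$. Here $\mathrm{conv}(X)$ denotes the convex hull of $X$. *)

theory Defs
  imports "HOL-Analysis.Analysis"
begin

definition uniquely_remotal :: "'a::real_normed_vector set \<Rightarrow> 'a set \<Rightarrow> bool" where
  "uniquely_remotal C D \<longleftrightarrow> C \<noteq> {} \<and>
     (\<forall>y\<in>D. \<exists>!x. x \<in> C \<and> norm (x - y) = (SUP u\<in>C. norm (u - y)))"

end

theory Submission
  imports Defs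
begin

theorem theorem1p1:
  fixes X :: "'a::real_normed_vector set"
  assumes "X \<noteq> {}" and "compact X"
    and "uniquely_remotal X (convex hull X)"
  shows "\<exists>x. X = {x}"
proof (rule ccontr)
  assume nsing: "\<not> (\<exists>x. X = {x})"
  define r where "r y = (SUP u\<in>X. norm (u - y))" for y
  have UR: "\<And>y. y \<in> convex hull X \<Longrightarrow> \<exists>!x. x \<in> X \<and> norm (x - y) = r y"
    using assms(3) unfolding uniquely_remotal_def r_def by blast
  obtain B where B: "\<And>u. u \<in> X \<Longrightarrow> norm u \<le> B"
    using compact_imp_bounded[OF assms(2)] bounded_iff by blast
  have bdd: "bdd_above ((\<lambda>u. norm (u - y)) ` X)" for y
  proof (rule bdd_aboveI2)
    fix u assume "u \<in> X"
    then show "norm (u - y) \<le> B + norm y"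
      using B[of u] norm_triangle_ineq4[of u y] by linarith
  qed
  have rge: "\<And>u y. u \<in> X \<Longrightarrow> norm (u - y) \<le> r y"
    unfolding r_def by (rule cSUP_upper[OF _ bdd])
  have rlip: "r z \<le> r y + norm (y - z)" for y z
    unfolding r_def
  proof (rule cSUP_least[OF assms(1)])
    fix u assume u: "u \<in> X"
    have "norm (u - z) \<le> norm (u - y) + norm (y - z)"
      using norm_triangle_ineq[of "u - y" "y - z"] by simp
    also have "\<dots> \<le> (SUP u\<in>X. norm (u - y)) + norm (y - z)"
      using rge[OF u, of y] unfolding r_def by simp
    finally show "norm (u - z) \<le> (SUP u\<in>X. norm (u - y)) + norm (y - z)" .
  qed
  have rcont: "continuous_on A r" for A
    unfolding continuous_on_iff
  proof (intro ballI allI impI)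
    fix x e assume "0 < (e::real)"
    then show "\<exists>d>0. \<forall>x'\<in>A. dist x' x < d \<longrightarrow> dist (r x') (r x) < e"
    proof (intro exI[of _ e] conjI ballI impI)
      fix x' assume "dist x' x < e"
      moreover have "r x' \<le> r x + norm (x - x')" "r x \<le> r x' + norm (x' - x)"
        using rlip by auto
      ultimately show "dist (r x') (r x) < e"
        by (simp add: dist_real_def dist_norm norm_minus_commute abs_le_iff)
    qed
  qed
  obtain a b where ab: "a \<in> X" "b \<in> X" "a \<noteq> b"
    using assms(1) nsing by blast
  define \<epsilon> where "\<epsilon> = norm (a - b) / 4"
  have epos: "\<epsilon> > 0" using ab by (simp add: \<epsilon>_def)
  have rbig: "r y \<ge> 2 * \<epsilon>" for y
  proof -
    have "norm (a - b) \<le> norm (a - y) + norm (b - y)"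
      using norm_triangle_ineq4[of "a - y" "b - y"] by simp
    then show ?thesis using rge[OF ab(1), of y] rge[OF ab(2), of y] by (simp add: \<epsilon>_def)
  qed
  have cov: "X \<subseteq> (\<Union>c\<in>X. ball c \<epsilon>)" using epos by auto
  obtain S where S: "S \<subseteq> X" "finite S" "X \<subseteq> (\<Union>c\<in>S. ball c \<epsilon>)"
    using compactE_image[OF assms(2) open_ball cov] by blast
  have Sne: "S \<noteq> {}" using S(3) assms(1) by auto
  have cS: "compact (convex hull S)" by (rule finite_imp_compact_convex_hull[OF S(2)])
  have cSne: "convex hull S \<noteq> {}" using Sne by simp
  obtain y where y: "y \<in> convex hull S" and ymin: "\<And>z. z \<in> convex hull S \<Longrightarrow> r y \<le> r z"
    using continuous_attains_inf[OF cS cSne rcont] by blast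
  have SX: "convex hull S \<subseteq> convex hull X" by (rule hull_mono[OF S(1)])
  define R where "R = r y"
  obtain p where p: "p \<in> X" "norm (p - y) = R"
    and puniq: "\<And>x. x \<in> X \<Longrightarrow> norm (x - y) = R \<Longrightarrow> x = p"
    using UR[OF subsetD[OF SX y]] unfolding R_def by blast
  obtain s where s: "s \<in> S" "dist s p < \<epsilon>" using S(3) p(1) by (auto simp: dist_commute)
  define K where "K = X \<inter> {q. R - \<epsilon> \<le> norm (q - p)}"
  have Kc: "compact K" unfolding K_def
    by (rule compact_Int_closed[OF assms(2)]) (intro closed_Collect_le continuous_intros)
  have key: "\<And>t q. 0 < t \<Longrightarrow> t \<le> 1 \<Longrightarrow> q \<in> X \<Longrightarrow> norm (q - ((1 - t) *\<^sub>R y + t *\<^sub>R s)) = r ((1 - t) *\<^sub>R y + t *\<^sub>R s)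
     \<Longrightarrow> q \<in> K \<and> R \<le> (1 - t) * norm (q - y) + t * norm (q - s)"
  proof -
    fix t q assume t: "0 < t" "t \<le> 1" and q: "q \<in> X"
      and qf: "norm (q - ((1 - t) *\<^sub>R y + t *\<^sub>R s)) = r ((1 - t) *\<^sub>R y + t *\<^sub>R s)"
    have yt: "(1 - t) *\<^sub>R y + t *\<^sub>R s \<in> convex hull S"
      using convexD[OF convex_convex_hull y hull_subset[THEN subsetD, OF s(1)]] t by simp
    have "R \<le> norm (q - ((1 - t) *\<^sub>R y + t *\<^sub>R s))"
      using ymin[OF yt] qf unfolding R_def by simp
    also have "q - ((1 - t) *\<^sub>R y + t *\<^sub>R s) = (1 - t) *\<^sub>R (q - y) + t *\<^sub>R (q - s)"
      by (simp add: algebra_simps)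
    also have "norm \<dots> \<le> (1 - t) * norm (q - y) + t * norm (q - s)"
      using norm_triangle_ineq[of "(1 - t) *\<^sub>R (q - y)" "t *\<^sub>R (q - s)"] t by simp
    finally have ineq: "R \<le> (1 - t) * norm (q - y) + t * norm (q - s)" .
    have "norm (q - y) \<le> R" using rge[OF q] R_def by simp
    then have "(1 - t) * norm (q - y) \<le> (1 - t) * R" using t by (simp add: mult_left_mono)
    with ineq have "t * R \<le> t * norm (q - s)" by (simp add: algebra_simps)
    then have "R \<le> norm (q - s)" using t by simp
    moreover have "norm (q - s) \<le> norm (q - p) + norm (p - s)"
      using norm_triangle_ineq[of "q - p" "p - s"] by simp
    moreover have "norm (p - s) < \<epsilon>" using s(2) by (simp add: dist_norm norm_minus_commute)
    ultimately have "R - \<epsilon> \<le> norm (q - p)" by linarith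
    with q ineq show "q \<in> K \<and> R \<le> (1 - t) * norm (q - y) + t * norm (q - s)"
      by (simp add: K_def)
  qed
  have Rbig: "R \<ge> 2 * \<epsilon>" using rbig R_def by simp
  have Kne: "K \<noteq> {}"
  proof -
    have s1: "s \<in> convex hull X" using SX hull_inc[OF s(1)] by blast
    obtain q where qX: "q \<in> X" and qs: "norm (q - s) = r s" using UR[OF s1] by blast
    have "norm (q - ((1 - 1) *\<^sub>R y + 1 *\<^sub>R s)) = r ((1 - 1) *\<^sub>R y + 1 *\<^sub>R s)"
      using qs by simp
    then have "q \<in> K" using key[OF zero_less_one order_refl qX] by blast
    then show ?thesis by blast
  qed
  obtain k0 where k0: "k0 \<in> K" and kmax: "\<And>q. q \<in> K \<Longrightarrow> norm (q - y) \<le> norm (k0 - y)"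
  proof -
    have "continuous_on K (\<lambda>q. norm (q - y))" by (intro continuous_intros)
    then show ?thesis using continuous_attains_sup[OF Kc Kne, of "\<lambda>q. norm (q - y)"] that by blast
  qed
  define m where "m = norm (k0 - y)"
  have k0X: "k0 \<in> X" and k0p: "R - \<epsilon> \<le> norm (k0 - p)" using k0 by (auto simp: K_def)
  have "k0 \<noteq> p" using k0p Rbig epos by auto
  then have "m \<noteq> R" using puniq[OF k0X] m_def by auto
  moreover have "m \<le> R" using rge[OF k0X] R_def m_def by simp
  ultimately have mR: "m < R" by simp
  define M where "M = R + norm (y - s)"
  have MR: "M \<ge> R" by (simp add: M_def)
  define t where "t = (R - m) / (2 * (M - m))"
  have t0: "0 < t" using mR MR by (simp add: t_def)
  have t1: "t \<le> 1" using mR MR by (simp add: t_def field_simps)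
  have yt: "(1 - t) *\<^sub>R y + t *\<^sub>R s \<in> convex hull X"
    using convexD[OF convex_convex_hull y hull_subset[THEN subsetD, OF s(1)]] t0 t1 SX by auto
  obtain q where q: "q \<in> X" "norm (q - ((1 - t) *\<^sub>R y + t *\<^sub>R s)) = r ((1 - t) *\<^sub>R y + t *\<^sub>R s)"
    using UR[OF yt] by blast
  from key[OF t0 t1 q] have qK: "q \<in> K" and ineq: "R \<le> (1 - t) * norm (q - y) + t * norm (q - s)"
    by auto
  have qm: "norm (q - y) \<le> m" using kmax[OF qK] m_def by simp
  have "norm (q - s) \<le> norm (q - y) + norm (y - s)"
    using norm_triangle_ineq[of "q - y" "y - s"] by simp
  then have qs: "norm (q - s) \<le> M" using rge[OF q(1), of y] R_def M_def by simp
  have "R \<le> (1 - t) * m + t * M"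
    using ineq mult_left_mono[OF qm, of "1 - t"] mult_left_mono[OF qs, of t] t0 t1 by linarith
  then have "R - m \<le> t * (M - m)" by (simp add: algebra_simps)
  also have "t * (M - m) = (R - m) / 2"
  proof -
    have "M - m \<noteq> 0" using mR MR by simp
    then show ?thesis by (simp add: t_def field_simps)
  qed
  finally show False using mR by simp
qed

end
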